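(* Let $P\subseteq M_{\mathbb{R}}$ be a $d$-dimensional pseudo-symmetric simplicial reflexive polytope. Then there is a lattice basis of $M$ with respect to which every vertex of $P$ has all coordinates in $\{-1,0,1\}$; i.e. $P$ can be embedded into $[-1,1]^d$ by a unimodular transformation.
   Context: $M\cong\mathbb{Z}^d$, $N$ its dual. $P$ is a $d$-dimensional lattice polytope in $M_{\mathbb{R}}$ with $0$ in its interior and primitive vertices; reflexive means $P^*=\{x\in N_{\mathbb{R}}:\langle x,y\rangle\ge-1\ \forall y\in P\}$ is a lattice polytope; simplicial means each facet is a simplex; pseudo-symmetric means some facet $F$ has $-F$ also a facet. *)

theory Defs
  imports "HOL-Analysis.Analysis"
begin

text \<open>Lattice M = Z^n inside M_R = R^n (dimension n = CARD('n)); N identified with Z^n via the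
standard inner product.\<close>

definition lattice_point :: "real^'n \<Rightarrow> bool" where
  "lattice_point x \<longleftrightarrow> (\<forall>i. x $ i \<in> \<int>)"

definition lattice_polytope :: "(real^'n) set \<Rightarrow> bool" where
  "lattice_polytope P \<longleftrightarrow> (\<exists>V. finite V \<and> (\<forall>v\<in>V. lattice_point v) \<and> P = convex hull V)"

definition primitive_point :: "real^'n \<Rightarrow> bool" where
  "primitive_point v \<longleftrightarrow> lattice_point v \<and> v \<noteq> 0 \<and>
     (\<forall>w (k::int). lattice_point w \<and> v = of_int k *\<^sub>R w \<longrightarrow> \<bar>k\<bar> = 1)"

definition polar_dual :: "(real^'n) set \<Rightarrow> (real^'n) set" where
  "polar_dual P = {x. \<forall>y\<in>P. x \<bullet> y \<ge> -1}"

definition reflexive_polytope :: "(real^'n) set \<Rightarrow> bool" where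
  "reflexive_polytope P \<longleftrightarrow> lattice_polytope P \<and> 0 \<in> interior P \<and>
     (\<forall>v. v extreme_point_of P \<longrightarrow> primitive_point v) \<and>
     lattice_polytope (polar_dual P)"

definition simplicial_polytope :: "(real^'n) set \<Rightarrow> bool" where
  "simplicial_polytope P \<longleftrightarrow> (\<forall>F. F facet_of P \<longrightarrow> (int CARD('n) - 1) simplex F)"

definition pseudo_symmetric :: "(real^'n) set \<Rightarrow> bool" where
  "pseudo_symmetric P \<longleftrightarrow> (\<exists>F. F facet_of P \<and> (uminus ` F) facet_of P)"

definition unimodular :: "real^'n^'n \<Rightarrow> bool" where
  "unimodular U \<longleftrightarrow> (\<forall>i j. U $ i $ j \<in> \<int>) \<and> \<bar>det U\<bar> = 1"

end

theory Submission
  imports Defs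
begin

definition e2 :: "'a \<Rightarrow> 'a \<Rightarrow> int" where "e2 k j = (if j = k then 2 else 0)"

lemma grp_sum:
  assumes "finite S" and zero: "(\<lambda>j. 0) \<in> G"
   and add: "\<forall>a\<in>G. \<forall>b\<in>G. (\<lambda>j. a j + b j) \<in> G"
   and "\<forall>k\<in>S. v k \<in> G"
  shows "(\<lambda>j. \<Sum>k\<in>S. v k j) \<in> G"
  using assms(1,4)
proof (induction S rule: finite_induct)
  case empty then show ?case using zero by simp
next
  case (insert x F)
  then have "(\<lambda>j. v x j + (\<Sum>k\<in>F. v k j)) \<in> G" using add by auto
  then show ?case using insert by simp
qed

lemma code_basis:
  fixes J :: "'a set" and G :: "('a \<Rightarrow> int) set"
  assumes "finite J"
   and "\<forall>g\<in>G. \<forall>j. j \<notin> J \<longrightarrow> g j = 0"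
   and "(\<lambda>j. 0) \<in> G"
   and "\<forall>a\<in>G. \<forall>b\<in>G. (\<lambda>j. a j + b j) \<in> G"
   and "\<forall>a\<in>G. \<forall>m::int. (\<lambda>j. m * a j) \<in> G"
   and "\<forall>k\<in>J. e2 k \<in> G"
  shows "\<exists>r. (\<forall>k\<in>J. r k \<in> G \<and> ((\<forall>j. r k j \<in> {-1,0,1}) \<or> (r k = e2 k \<and> (\<forall>g\<in>G. even (g k)))))
            \<and> (\<forall>h\<in>G. \<exists>\<beta>. h = (\<lambda>j. \<Sum>k\<in>J. \<beta> k * r k j))"
  using assms
proof (induction J arbitrary: G rule: finite_induct)
  case empty
  have "\<forall>h\<in>G. h = (\<lambda>j. 0)" using empty.prems(1) by auto
  then show ?case by auto
next
  case (insert j0 J G)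
  note sub = insert.prems(1) and zero = insert.prems(2) and add = insert.prems(3)
    and smul = insert.prems(4) and two = insert.prems(5)
  define G' where "G' = {g\<in>G. g j0 = 0}"
  have sub': "\<forall>g\<in>G'. \<forall>j. j \<notin> J \<longrightarrow> g j = 0"
    using sub unfolding G'_def by auto
  have zero': "(\<lambda>j. 0) \<in> G'" using zero unfolding G'_def by auto
  have add': "\<forall>a\<in>G'. \<forall>b\<in>G'. (\<lambda>j. a j + b j) \<in> G'" using add unfolding G'_def by auto
  have smul': "\<forall>a\<in>G'. \<forall>m::int. (\<lambda>j. m * a j) \<in> G'" using smul unfolding G'_def by auto
  have two': "\<forall>k\<in>J. e2 k \<in> G'" using two insert.hyps(2) unfolding G'_def e2_def by auto
  obtain r' where r'1: "\<forall>k\<in>J. r' k \<in> G' \<and> ((\<forall>j. r' k j \<in> {-1,0,1}) \<or> (r' k = e2 k \<and> (\<forall>g\<in>G'. even (g k))))"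
    and r'2: "\<forall>h\<in>G'. \<exists>\<beta>. h = (\<lambda>j. \<Sum>k\<in>J. \<beta> k * r' k j)"
    using insert.IH[OF sub' zero' add' smul' two'] by blast
  have lin: "(\<lambda>j. a j + m * b j) \<in> G" if "a \<in> G" "b \<in> G" for a b m
  proof -
    have "(\<lambda>j. m * b j) \<in> G" using smul that by blast
    from add[rule_format, OF that(1) this] show ?thesis by simp
  qed
  show ?case
  proof (cases "\<forall>g\<in>G. even (g j0)")
    case True
    define r where "r = r'(j0 := e2 j0)"
    have P1: "\<forall>k\<in>insert j0 J. r k \<in> G \<and> ((\<forall>j. r k j \<in> {-1,0,1}) \<or> (r k = e2 k \<and> (\<forall>g\<in>G. even (g k))))"
    proof
      fix k assume k: "k \<in> insert j0 J"
      show "r k \<in> G \<and> ((\<forall>j. r k j \<in> {-1,0,1}) \<or> (r k = e2 k \<and> (\<forall>g\<in>G. even (g k))))"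
      proof (cases "k = j0")
        case True then show ?thesis using two True \<open>\<forall>g\<in>G. even (g j0)\<close> unfolding r_def by auto
      next
        case False
        then have kJ: "k \<in> J" and rk: "r k = r' k" using k unfolding r_def by auto
        have "\<forall>g\<in>G. even (g k)" if ev: "\<forall>g\<in>G'. even (g k)"
        proof
          fix g assume g: "g \<in> G"
          define g' where "g' = (\<lambda>j. g j + (- (g j0 div 2)) * e2 j0 j)"
          have "g' \<in> G" unfolding g'_def using lin[OF g, of "e2 j0" "- (g j0 div 2)"] two by simp
          moreover have "g' j0 = 0" using True g unfolding g'_def e2_def by auto
          ultimately have "g' \<in> G'" unfolding G'_def by auto
          then have "even (g' k)" using ev by auto
          then show "even (g k)" using False unfolding g'_def e2_def by auto
        qed
        then show ?thesis using r'1 kJ rk unfolding G'_def by auto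
      qed
    qed
    have P2: "\<forall>h\<in>G. \<exists>\<beta>. h = (\<lambda>j. \<Sum>k\<in>insert j0 J. \<beta> k * r k j)"
    proof
      fix h assume h: "h \<in> G"
      define h' where "h' = (\<lambda>j. h j + (- (h j0 div 2)) * e2 j0 j)"
      have "h' \<in> G" unfolding h'_def using lin[OF h, of "e2 j0" "- (h j0 div 2)"] two by simp
      moreover have "h' j0 = 0" using True h unfolding h'_def e2_def by auto
      ultimately have "h' \<in> G'" unfolding G'_def by auto
      then obtain \<beta>' where b': "h' = (\<lambda>j. \<Sum>k\<in>J. \<beta>' k * r' k j)" using r'2 by blast
      define \<beta> where "\<beta> = \<beta>'(j0 := h j0 div 2)"
      have "h = (\<lambda>j. \<Sum>k\<in>insert j0 J. \<beta> k * r k j)"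
      proof
        fix j
        have "(\<Sum>k\<in>insert j0 J. \<beta> k * r k j) = \<beta> j0 * r j0 j + (\<Sum>k\<in>J. \<beta> k * r k j)"
          using insert.hyps by simp
        also have "(\<Sum>k\<in>J. \<beta> k * r k j) = (\<Sum>k\<in>J. \<beta>' k * r' k j)"
          using insert.hyps(2) unfolding \<beta>_def r_def by (intro sum.cong) auto
        also have "\<dots> = h' j" using b' by simp
        finally show "h j = (\<Sum>k\<in>insert j0 J. \<beta> k * r k j)"
          unfolding \<beta>_def r_def h'_def by simp
      qed
      then show "\<exists>\<beta>. h = (\<lambda>j. \<Sum>k\<in>insert j0 J. \<beta> k * r k j)" by blast
    qed
    show ?thesis using P1 P2 by blast
  next
    case False
    then obtain g0 where g0: "g0 \<in> G" "odd (g0 j0)" by blast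
    define \<rho> where "\<rho> = (\<lambda>j. g0 j mod 2)"
    have "(\<lambda>j. \<Sum>k\<in>insert j0 J. (- (g0 k div 2)) * e2 k j) \<in> G"
    proof (rule grp_sum[OF _ zero add])
      show "finite (insert j0 J)" using insert.hyps by simp
      show "\<forall>k\<in>insert j0 J. (\<lambda>j. - (g0 k div 2) * e2 k j) \<in> G"
        using smul two by blast
    qed
    then have "(\<lambda>j. g0 j + 1 * (\<Sum>k\<in>insert j0 J. (- (g0 k div 2)) * e2 k j)) \<in> G"
      using lin[OF g0(1)] by blast
    moreover have "(\<lambda>j. g0 j + 1 * (\<Sum>k\<in>insert j0 J. (- (g0 k div 2)) * e2 k j)) = \<rho>"
    proof
      fix j
      have "(\<Sum>k\<in>insert j0 J. (- (g0 k div 2)) * e2 k j) = (if j \<in> insert j0 J then - (g0 j div 2) * 2 else 0)"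
        unfolding e2_def using insert.hyps by (simp add: sum.delta' if_distrib cong: if_cong)
      moreover have "j \<notin> insert j0 J \<Longrightarrow> g0 j = 0" using sub g0 by auto
      ultimately show "g0 j + 1 * (\<Sum>k\<in>insert j0 J. (- (g0 k div 2)) * e2 k j) = \<rho> j"
        unfolding \<rho>_def by (auto simp: minus_div_mult_eq_mod [symmetric] algebra_simps)
    qed
    ultimately have \<rho>G: "\<rho> \<in> G" by simp
    have \<rho>01: "\<rho> j \<in> {0,1}" for j unfolding \<rho>_def by auto
    have \<rho>j0: "\<rho> j0 = 1" using g0 unfolding \<rho>_def by (simp add: odd_iff_mod_2_eq_one)
    define R where "R = {k\<in>J. r' k = e2 k \<and> \<rho> k = 1}"
    define r where "r = (\<lambda>k. if k = j0 then \<rho> else if k \<in> R then (\<lambda>j. \<rho> j - e2 k j) else r' k)"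
    have proj: "(\<lambda>j. h j + (- h j0) * \<rho> j) \<in> G'" if "h \<in> G" for h
      using lin[OF that \<rho>G, of "- h j0"] \<rho>j0 unfolding G'_def by simp
    have P1: "\<forall>k\<in>insert j0 J. r k \<in> G \<and> ((\<forall>j. r k j \<in> {-1,0,1}) \<or> (r k = e2 k \<and> (\<forall>g\<in>G. even (g k))))"
    proof
      fix k assume k: "k \<in> insert j0 J"
      show "r k \<in> G \<and> ((\<forall>j. r k j \<in> {-1,0,1}) \<or> (r k = e2 k \<and> (\<forall>g\<in>G. even (g k))))"
      proof (cases "k = j0")
        case True then show ?thesis using \<rho>G \<rho>01 unfolding r_def by auto
      next
        case False
        then have kJ: "k \<in> J" using k by auto
        show ?thesis
        proof (cases "k \<in> R")
          case True
          then have "r k = (\<lambda>j. \<rho> j + (-1) * e2 k j)" using False unfolding r_def by auto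
          moreover have "(\<lambda>j. \<rho> j + (-1) * e2 k j) \<in> G" using lin[OF \<rho>G, of "e2 k" "-1"] two kJ by simp
          moreover have "\<forall>j. \<rho> j + (-1) * e2 k j \<in> {-1,0,1}"
          proof
            fix j show "\<rho> j + (-1) * e2 k j \<in> {-1,0,1}"
              using \<rho>01[of j] True unfolding R_def e2_def by auto
          qed
          ultimately show ?thesis by auto
        next
          case nR: False
          then have rk: "r k = r' k" using False unfolding r_def by auto
          have "\<forall>g\<in>G. even (g k)" if ev: "\<forall>g\<in>G'. even (g k)" and e: "r' k = e2 k"
          proof
            fix g assume g: "g \<in> G"
            have "\<rho> k = 0" using nR e kJ \<rho>01[of k] unfolding R_def by auto
            have "even (g k + (- g j0) * \<rho> k)" using ev proj[OF g] by auto
            then show "even (g k)" using \<open>\<rho> k = 0\<close> by simp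
          qed
          then show ?thesis using r'1 kJ rk unfolding G'_def by auto
        qed
      qed
    qed
    have P2: "\<forall>h\<in>G. \<exists>\<beta>. h = (\<lambda>j. \<Sum>k\<in>insert j0 J. \<beta> k * r k j)"
    proof
      fix h assume h: "h \<in> G"
      obtain \<beta>' where b': "(\<lambda>j. h j + (- h j0) * \<rho> j) = (\<lambda>j. \<Sum>k\<in>J. \<beta>' k * r' k j)"
        using r'2 proj[OF h] by blast
      define \<beta> where "\<beta> = (\<lambda>k. if k = j0 then h j0 + (\<Sum>k\<in>R. \<beta>' k) else if k \<in> R then - \<beta>' k else \<beta>' k)"
      have "h = (\<lambda>j. \<Sum>k\<in>insert j0 J. \<beta> k * r k j)"
      proof
        fix j
        have fR: "finite R" "R \<subseteq> J" using insert.hyps unfolding R_def by auto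
        have "(\<Sum>k\<in>insert j0 J. \<beta> k * r k j) = \<beta> j0 * \<rho> j + (\<Sum>k\<in>J. \<beta> k * r k j)"
          using insert.hyps unfolding r_def by simp
        also have "(\<Sum>k\<in>J. \<beta> k * r k j) = (\<Sum>k\<in>J. \<beta>' k * r' k j - (if k \<in> R then \<beta>' k * \<rho> j else 0))"
          using insert.hyps(2) unfolding \<beta>_def r_def R_def
          by (intro sum.cong) (auto simp: algebra_simps)
        also have "\<dots> = (\<Sum>k\<in>J. \<beta>' k * r' k j) - (\<Sum>k\<in>R. \<beta>' k) * \<rho> j"
        proof -
          have "(\<Sum>k\<in>J. (if k \<in> R then \<beta>' k * \<rho> j else 0)) = (\<Sum>k\<in>J \<inter> R. \<beta>' k * \<rho> j)"
            using sum.inter_restrict[OF insert.hyps(1), of "\<lambda>k. \<beta>' k * \<rho> j" R] by simp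
          also have "J \<inter> R = R" using fR by auto
          finally show ?thesis by (simp add: sum_subtractf sum_distrib_right)
        qed
        also have "(\<Sum>k\<in>J. \<beta>' k * r' k j) = h j + (- h j0) * \<rho> j" using b' by metis
        finally show "h j = (\<Sum>k\<in>insert j0 J. \<beta> k * r k j)"
          unfolding \<beta>_def using insert.hyps(2) by (simp add: algebra_simps)
      qed
      then show "\<exists>\<beta>. h = (\<lambda>j. \<Sum>k\<in>insert j0 J. \<beta> k * r k j)" by blast
    qed
    show ?thesis using P1 P2 by blast
  qed
qed

lemma lat_dot: "lattice_point x \<Longrightarrow> lattice_point y \<Longrightarrow> x \<bullet> y \<in> \<int>"
  unfolding lattice_point_def inner_vec_def by (auto intro!: Ints_sum Ints_mult)

lemma lat_add: "lattice_point x \<Longrightarrow> lattice_point y \<Longrightarrow> lattice_point (x + y)"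
  unfolding lattice_point_def by auto

lemma lat_diff: "lattice_point x \<Longrightarrow> lattice_point y \<Longrightarrow> lattice_point (x - y)"
  unfolding lattice_point_def by auto

lemma lat_minus: "lattice_point x \<Longrightarrow> lattice_point (- x)"
  unfolding lattice_point_def by auto

lemma lat_scale: "lattice_point x \<Longrightarrow> lattice_point (of_int k *\<^sub>R x)"
  unfolding lattice_point_def by auto

lemma lat_sum: "(\<And>k. k \<in> S \<Longrightarrow> lattice_point (v k)) \<Longrightarrow> lattice_point (\<Sum>k\<in>S. v k)"
  unfolding lattice_point_def by (auto simp: sum_component intro!: Ints_sum)

lemma polar_hull:
  assumes "P = convex hull E"
  shows "g \<in> polar_dual P \<longleftrightarrow> (\<forall>y\<in>E. g \<bullet> y \<ge> -1)"
proof
  assume "g \<in> polar_dual P"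
  then show "\<forall>y\<in>E. g \<bullet> y \<ge> -1" using assms hull_subset[of E convex] unfolding polar_dual_def by auto
next
  assume h: "\<forall>y\<in>E. g \<bullet> y \<ge> -1"
  have "convex {y. g \<bullet> y \<ge> -1}" by (rule convex_halfspace_ge)
  then have "convex hull E \<subseteq> {y. g \<bullet> y \<ge> -1}" using h by (intro hull_minimal) auto
  then show "g \<in> polar_dual P" using assms unfolding polar_dual_def by auto
qed

lemma tight_extreme:
  fixes w :: "real^'n"
  assumes "w \<in> polar_dual P" and s: "\<forall>j. s j \<in> P \<and> w \<bullet> s j = -1"
    and sp: "\<forall>g. (\<forall>j. g \<bullet> s j = 0) \<longrightarrow> g = 0"
  shows "w extreme_point_of polar_dual P"
  unfolding extreme_point_of_def
proof (intro conjI ballI notI)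
  show "w \<in> polar_dual P" by fact
  fix a b assume a: "a \<in> polar_dual P" and b: "b \<in> polar_dual P" and "w \<in> open_segment a b"
  then obtain t where ab: "a \<noteq> b" and t: "0 < t" "t < 1" and w: "w = (1 - t) *\<^sub>R a + t *\<^sub>R b"
    by (auto simp: in_segment)
  have "(a - b) \<bullet> s j = 0" for j
  proof -
    have "a \<bullet> s j \<ge> -1" "b \<bullet> s j \<ge> -1" using a b s unfolding polar_dual_def by auto
    moreover have "(1 - t) * (a \<bullet> s j) + t * (b \<bullet> s j) = -1"
      using s w by (simp add: inner_add_left)
    ultimately have e0: "(1 - t) * (a \<bullet> s j + 1) + t * (b \<bullet> s j + 1) = 0"
      "(1 - t) * (a \<bullet> s j + 1) \<ge> 0" "t * (b \<bullet> s j + 1) \<ge> 0"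
    proof -
      show "(1 - t) * (a \<bullet> s j + 1) + t * (b \<bullet> s j + 1) = 0"
        using \<open>(1 - t) * (a \<bullet> s j) + t * (b \<bullet> s j) = -1\<close> by (simp add: algebra_simps)
      show "(1 - t) * (a \<bullet> s j + 1) \<ge> 0" using t \<open>a \<bullet> s j \<ge> -1\<close> by (intro mult_nonneg_nonneg) auto
      show "t * (b \<bullet> s j + 1) \<ge> 0" using t \<open>b \<bullet> s j \<ge> -1\<close> by (intro mult_nonneg_nonneg) auto
    qed
    then have "(1 - t) * (a \<bullet> s j + 1) = 0" "t * (b \<bullet> s j + 1) = 0" by linarith+
    then have "a \<bullet> s j = -1" "b \<bullet> s j = -1" using t by auto
    then show ?thesis by (simp add: inner_diff_left)
  qed
  then have "a - b = 0" using sp by blast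
  then show False using ab by simp
qed

lemma facet_normal:
  fixes P F :: "(real^'n) set"
  assumes "polytope P" "0 \<in> interior P" "F facet_of P"
  shows "\<exists>u. (\<forall>y\<in>P. u \<bullet> y \<ge> -1) \<and> F = P \<inter> {y. u \<bullet> y = -1}"
proof -
  have "F face_of P" using assms(3) unfolding facet_of_def by auto
  then have "F exposed_face_of P"
    using exposed_face_of_polyhedron[OF polytope_imp_polyhedron[OF assms(1)]] by auto
  then obtain a b where ab: "P \<subseteq> {x. a \<bullet> x \<le> b}" "F = P \<inter> {x. a \<bullet> x = b}"
    unfolding exposed_face_of_def by auto
  obtain e where e: "e > 0" "ball 0 e \<subseteq> P" using assms(2) mem_interior by blast
  have "a \<noteq> 0"
  proof
    assume "a = 0"
    have "F \<noteq> {}" "aff_dim F = aff_dim P - 1" using assms(3) unfolding facet_of_def by auto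
    then have "b = 0" using ab \<open>a = 0\<close> by auto
    then have "F = P" using ab \<open>a = 0\<close> by auto
    then show False using \<open>aff_dim F = aff_dim P - 1\<close> by simp
  qed
  define y0 where "y0 = (e / 2 / norm a) *\<^sub>R a"
  have "norm y0 < e" unfolding y0_def using e \<open>a \<noteq> 0\<close> by simp
  then have "y0 \<in> P" using e by auto
  then have "a \<bullet> y0 \<le> b" using ab by auto
  moreover have "a \<bullet> y0 = e / 2 * norm a"
    unfolding y0_def using \<open>a \<noteq> 0\<close> by (simp add: power2_norm_eq_inner[symmetric] power2_eq_square)
  ultimately have bpos: "b > 0" using e \<open>a \<noteq> 0\<close> by (smt (verit) half_gt_zero mult_pos_pos zero_less_norm_iff)
  define u where "u = (- 1 / b) *\<^sub>R a"
  have ud: "u \<bullet> y = - (a \<bullet> y) / b" for y unfolding u_def by simp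
  show ?thesis
  proof (intro exI conjI ballI)
    fix y assume "y \<in> P"
    then have "a \<bullet> y \<le> b" using ab by auto
    then show "u \<bullet> y \<ge> -1" unfolding ud using bpos by (simp add: field_simps)
  next
    show "F = P \<inter> {y. u \<bullet> y = - 1}" unfolding ab(2) ud using bpos by (auto simp: field_simps)
  qed
qed

lemma dual_affine_indep:
  fixes s h :: "'n::finite \<Rightarrow> real^'m"
  assumes hs: "\<forall>i j. h i \<bullet> s j = (if i = j then 1 else 0)"
  shows "\<not> affine_dependent (range s)" and "inj s"
proof -
  show inj: "inj s"
  proof (rule injI)
    fix i j assume "s i = s j"
    then have "h i \<bullet> s i = h i \<bullet> s j" by simp
    then show "i = j" using hs by (auto split: if_splits)
  qed
  show "\<not> affine_dependent (range s)"
  proof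
    assume "affine_dependent (range s)"
    then obtain S U where S: "finite S" "S \<subseteq> range s" "sum U S = 0" "\<exists>v\<in>S. U v \<noteq> 0"
      "(\<Sum>v\<in>S. U v *\<^sub>R v) = 0"
      unfolding affine_dependent_explicit by blast
    then obtain i where i: "s i \<in> S" "U (s i) \<noteq> 0" by blast
    have "h i \<bullet> (\<Sum>v\<in>S. U v *\<^sub>R v) = (\<Sum>v\<in>S. U v * (h i \<bullet> v))"
      by (simp add: inner_sum_right)
    also have "\<dots> = (\<Sum>v\<in>S. if v = s i then U v else 0)"
    proof (rule sum.cong)
      fix v assume "v \<in> S"
      then obtain j where "v = s j" using S by auto
      then show "U v * (h i \<bullet> v) = (if v = s i then U v else 0)"
        using hs inj by (auto simp: inj_eq)
    qed simp
    also have "\<dots> = U (s i)" using S(1) i(1) by (simp add: sum.delta')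
    finally show False using S(5) i(2) by simp
  qed
qed

lemma simp_tight:
  fixes P :: "(real^'n) set" and w q :: "real^'n" and s h :: "'n \<Rightarrow> real^'n"
  assumes refl: "reflexive_polytope P" and simp: "simplicial_polytope P"
    and w: "w \<in> polar_dual P"
    and sext: "\<forall>j. s j extreme_point_of P" and ws: "\<forall>j. w \<bullet> s j = -1"
    and hs: "\<forall>i j. h i \<bullet> s j = (if i = j then 1 else 0)"
    and q: "q extreme_point_of P" "w \<bullet> q = -1"
  shows "q \<in> range s"
proof -
  obtain V0 where V0: "finite V0" "P = convex hull V0"
    using refl unfolding reflexive_polytope_def lattice_polytope_def by auto
  have cvx: "convex P" using V0 by (simp add: convex_convex_hull)
  have int0: "0 \<in> interior P" using refl unfolding reflexive_polytope_def by auto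
  define G where "G = P \<inter> {x. w \<bullet> x = -1}"
  have ge: "\<forall>x\<in>P. w \<bullet> x \<ge> -1" using w unfolding polar_dual_def by auto
  have face: "G face_of P" unfolding G_def
    by (rule face_of_Int_supporting_hyperplane_ge[OF cvx]) (use ge in auto)
  have sP: "s j \<in> P" for j using sext unfolding extreme_point_of_def by auto
  have sG: "range s \<subseteq> G" using sP ws unfolding G_def by auto
  have ai: "\<not> affine_dependent (range s)" and inj: "inj s" using dual_affine_indep[OF hs] by auto
  have cs: "card (range s) = CARD('n)" using inj by (simp add: card_image)
  have ads: "aff_dim (range s) = int CARD('n) - 1"
    using aff_dim_affine_independent[OF ai] cs by simp
  have adP: "aff_dim P = int CARD('n)"
    using aff_dim_nonempty_interior[of P] int0 by auto
  have "aff_dim (range s) \<le> aff_dim G" using sG by (rule aff_dim_subset)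
  moreover have "G \<noteq> P"
  proof
    assume "G = P"
    then have "0 \<in> G" using int0 interior_subset by blast
    then show False unfolding G_def by simp
  qed
  then have "aff_dim G < aff_dim P" using face_of_aff_dim_lt[OF cvx face] by simp
  ultimately have adG: "aff_dim G = aff_dim P - 1" using ads adP by simp
  have "G \<noteq> {}" using sG by auto
  then have "G facet_of P" using face adG unfolding facet_of_def by auto
  then have "(int CARD('n) - 1) simplex G" using simp unfolding simplicial_polytope_def by auto
  then obtain C where C: "finite C" "\<not> affine_dependent C" "int (card C) = int CARD('n) - 1 + 1"
    "G = convex hull C" unfolding simplex by blast
  have extG: "x extreme_point_of G" if "x extreme_point_of P" "x \<in> G" for x
    using extreme_point_of_face[OF face] that by auto
  have "range s \<subseteq> C"
  proof
    fix x assume "x \<in> range s"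
    then have "x extreme_point_of G" using extG sext sG by auto
    then show "x \<in> C" using C(4) extreme_point_of_convex_hull by blast
  qed
  moreover have "card (range s) = card C" using C(3) cs by simp
  ultimately have "range s = C" using C(1) card_subset_eq by blast
  moreover have "q \<in> G" using q unfolding G_def extreme_point_of_def by auto
  then have "q extreme_point_of G" using extG q by auto
  then have "q \<in> C" using C(4) extreme_point_of_convex_hull by blast
  ultimately show ?thesis by simp
qed

lemma refl_lat_ext:
  assumes "reflexive_polytope P" "q extreme_point_of P"
  shows "lattice_point q"
  using assms unfolding reflexive_polytope_def primitive_point_def by auto

lemma refl_lat_dual_ext:
  assumes "reflexive_polytope P" "q extreme_point_of polar_dual P"
  shows "lattice_point q"
proof -
  obtain W where W: "finite W" "\<forall>v\<in>W. lattice_point v" "polar_dual P = convex hull W"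
    using assms(1) unfolding reflexive_polytope_def lattice_polytope_def by auto
  then have "q \<in> W" using assms(2) extreme_point_of_convex_hull by metis
  then show ?thesis using W by auto
qed

lemma core:
  fixes P :: "(real^'n) set" and c f :: "'n \<Rightarrow> real^'n" and u :: "real^'n" and E
  assumes refl: "reflexive_polytope P" and simp: "simplicial_polytope P"
    and E: "E = {x. x extreme_point_of P}" "finite E" "P = convex hull E"
    and cf: "\<forall>i j. f i \<bullet> c j = (if i = j then 1 else 0)"
    and H3: "\<forall>g. g = (\<Sum>k\<in>UNIV. (g \<bullet> c k) *\<^sub>R f k)"
    and cext: "\<forall>j. c j extreme_point_of P" "\<forall>j. (- c j) extreme_point_of P"
    and u: "u \<in> polar_dual P" "lattice_point u" "\<forall>j. u \<bullet> c j = -1"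
    and uF: "\<forall>y\<in>E. u \<bullet> y = -1 \<longrightarrow> y \<in> range c"
  shows "\<exists>T. (T = 1 \<or> T = 2) \<and> lattice_point (T *\<^sub>R f i) \<and> u + T *\<^sub>R f i \<in> polar_dual P \<and>
     (T = 2 \<longrightarrow> (\<forall>q. q extreme_point_of P \<longrightarrow> q \<notin> range c \<longrightarrow> q \<notin> range (\<lambda>j. - c j)
          \<longrightarrow> (u + T *\<^sub>R f i) \<bullet> q > -1))"
proof -
  have Qd: "g \<in> polar_dual P \<longleftrightarrow> (\<forall>y\<in>E. g \<bullet> y \<ge> -1)" for g using polar_hull[OF E(3)] .
  have EP: "y \<in> P" if "y \<in> E" for y using that E(1) unfolding extreme_point_of_def by auto
  have uge: "\<forall>y\<in>E. u \<bullet> y \<ge> -1" using u(1) Qd by auto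
  define D where "D = {y\<in>E. f i \<bullet> y < 0}"
  have fD: "finite D" using E(2) unfolding D_def by auto
  have mcD: "- c i \<in> D" using cext(2) cf E(1) unfolding D_def by auto
  define ratio where "ratio y = (1 + u \<bullet> y) / (- (f i \<bullet> y))" for y
  have rpos: "ratio y > 0" if "y \<in> D" for y
  proof -
    have yE: "y \<in> E" and fy: "f i \<bullet> y < 0" using that unfolding D_def by auto
    have "u \<bullet> y \<noteq> -1"
    proof
      assume "u \<bullet> y = -1"
      then obtain k where "y = c k" using uF yE by auto
      then show False using fy cf by (auto split: if_splits)
    qed
    then have "1 + u \<bullet> y > 0" using uge yE by force
    then show ?thesis unfolding ratio_def using fy by (simp add: divide_pos_neg)
  qed
  define T where "T = Min (ratio ` D)"
  have TD: "T \<in> ratio ` D" unfolding T_def using fD mcD by (intro Min_in) auto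
  have Tle: "T \<le> ratio y" if "y \<in> D" for y unfolding T_def using fD that by (intro Min_le) auto
  have Tpos: "T > 0" using TD rpos by auto
  have "ratio (- c i) = 2" unfolding ratio_def using u(3) cf by (simp add: inner_minus_right)
  then have T2: "T \<le> 2" using Tle[OF mcD] by simp
  obtain ys where ys: "ys \<in> D" "ratio ys = T" using TD by auto
  define w where "w = u + T *\<^sub>R f i"
  have wy: "w \<bullet> y = u \<bullet> y + T * (f i \<bullet> y)" for y unfolding w_def by (simp add: inner_add_left)
  have wQ: "w \<in> polar_dual P"
    unfolding Qd
  proof
    fix y assume yE: "y \<in> E"
    show "w \<bullet> y \<ge> -1"
    proof (cases "f i \<bullet> y < 0")
      case True
      then have "y \<in> D" using yE unfolding D_def by auto
      then have "T \<le> (1 + u \<bullet> y) / (- (f i \<bullet> y))" using Tle unfolding ratio_def by auto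
      moreover have dpos: "- (f i \<bullet> y) > 0" using True by simp
      ultimately have "T * (- (f i \<bullet> y)) \<le> 1 + u \<bullet> y" by (metis pos_le_divide_eq)
      then show ?thesis unfolding wy by simp
    next
      case False
      then have "T * (f i \<bullet> y) \<ge> 0" using Tpos by simp
      moreover have "u \<bullet> y \<ge> -1" using uge yE by blast
      ultimately show ?thesis unfolding wy by linarith
    qed
  qed
  have wys: "w \<bullet> ys = -1"
  proof -
    have fy: "f i \<bullet> ys < 0" using ys unfolding D_def by auto
    have "T * (- (f i \<bullet> ys)) = 1 + u \<bullet> ys" using ys(2) fy unfolding ratio_def by (simp add: field_simps)
    then show ?thesis unfolding wy by simp
  qed
  have wext: "w extreme_point_of polar_dual P"
  proof (rule tight_extreme[OF wQ, where s = "\<lambda>j. if j = i then ys else c j"])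
    show "\<forall>j. (if j = i then ys else c j) \<in> P \<and> w \<bullet> (if j = i then ys else c j) = -1"
      using ys wys cext(1) u(3) cf EP unfolding D_def extreme_point_of_def by (auto simp: wy)
    show "\<forall>g. (\<forall>j. g \<bullet> (if j = i then ys else c j) = 0) \<longrightarrow> g = 0"
    proof (intro allI impI)
      fix g :: "real^'n" assume h: "\<forall>j. g \<bullet> (if j = i then ys else c j) = 0"
      have "g = (\<Sum>k\<in>UNIV. (g \<bullet> c k) *\<^sub>R f k)" using H3 by blast
      also have "\<dots> = (\<Sum>k\<in>UNIV. if k = i then (g \<bullet> c i) *\<^sub>R f i else 0)"
        by (rule sum.cong) (use h in \<open>auto split: if_splits\<close>)
      also have "\<dots> = (g \<bullet> c i) *\<^sub>R f i" by simp
      finally have g: "g = (g \<bullet> c i) *\<^sub>R f i" .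
      have "0 = g \<bullet> ys" using h[rule_format, of i] by simp
      also have "\<dots> = (g \<bullet> c i) * (f i \<bullet> ys)" by (subst g) simp
      finally have "g \<bullet> c i = 0" using ys unfolding D_def by auto
      then show "g = 0" using g by simp
    qed
  qed
  have wl: "lattice_point w" using refl_lat_dual_ext[OF refl wext] .
  have Tf: "lattice_point (T *\<^sub>R f i)"
    using lat_diff[OF wl u(2)] unfolding w_def by simp
  have cl: "lattice_point (c i)" using refl_lat_ext[OF refl] cext by auto
  have fcii: "f i \<bullet> c i = 1" using cf by simp
  have "(T *\<^sub>R f i) \<bullet> c i = T" by (simp add: fcii)
  then have "T \<in> \<int>" using lat_dot[OF Tf cl] by metis
  then obtain m where m: "T = of_int m" by (auto elim: Ints_cases)
  then have "m = 1 \<or> m = 2" using Tpos T2 by auto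
  then have T12: "T = 1 \<or> T = 2" using m by auto
  have strict: "(u + T *\<^sub>R f i) \<bullet> q > -1"
    if T2': "T = 2" and q: "q extreme_point_of P" "q \<notin> range c" "q \<notin> range (\<lambda>j. - c j)" for q
  proof -
    have "q \<in> E" using q E(1) by auto
    then have ge: "w \<bullet> q \<ge> -1" using wQ Qd by auto
    have "w \<bullet> q \<noteq> -1"
    proof
      assume wq: "w \<bullet> q = -1"
      have "q \<in> range (\<lambda>j. if j = i then - c i else c j)"
      proof (rule simp_tight[OF refl simp wQ _ _ _ q(1) wq, where h = "\<lambda>j. if j = i then - f i else f j"])
        show "\<forall>j. (if j = i then - c i else c j) extreme_point_of P" using cext by auto
        show "\<forall>j. w \<bullet> (if j = i then - c i else c j) = -1"
          using u(3) cf T2' by (auto simp: wy inner_minus_right)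
        show "\<forall>a b. (if a = i then - f i else f a) \<bullet> (if b = i then - c i else c b) = (if a = b then 1 else 0)"
          using cf by (auto simp: inner_minus_right inner_minus_left)
      qed
      then show False using q by (auto split: if_splits)
    qed
    then show ?thesis using ge unfolding w_def by simp
  qed
  show ?thesis using T12 Tf wQ strict unfolding w_def by blast
qed

lemma mv_row: "((A::real^'n^'m) *v x) $ i = A $ i \<bullet> x"
  by (simp add: matrix_vector_mult_def inner_vec_def mult.commute)

lemma det_Ints:
  fixes A :: "real^'n^'n"
  assumes "\<forall>i j. A $ i $ j \<in> \<int>"
  shows "det A \<in> \<int>"
  unfolding det_def using assms by (auto intro!: Ints_sum Ints_mult Ints_prod)

theorem corollary4p8:
  fixes P :: "(real^'n) set"
  assumes "reflexive_polytope P" and "simplicial_polytope P" and "pseudo_symmetric P"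
  shows "\<exists>U::real^'n^'n. unimodular U \<and>
           (\<forall>v. v extreme_point_of P \<longrightarrow> (\<forall>i. (U *v v) $ i \<in> {-1, 0, 1}))"
proof -
  note refl = assms(1) and simp = assms(2)
  obtain V0 where V0: "finite V0" "P = convex hull V0"
    using refl unfolding reflexive_polytope_def lattice_polytope_def by auto
  have int0: "0 \<in> interior P" using refl unfolding reflexive_polytope_def by auto
  have poly: "polytope P" using V0 unfolding polytope_def by auto
  have cvx: "convex P" using V0 by (simp add: convex_convex_hull)
  obtain F where F: "F facet_of P" "(uminus ` F) facet_of P"
    using assms(3) unfolding pseudo_symmetric_def by auto
  have Fface: "F face_of P" and mFface: "(uminus ` F) face_of P" using F unfolding facet_of_def by auto
  obtain C where C: "finite C" "\<not> affine_dependent C" "int (card C) = int CARD('n) - 1 + 1"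
    "F = convex hull C"
    using simp F(1) unfolding simplicial_polytope_def simplex by blast
  obtain u where u: "\<forall>y\<in>P. u \<bullet> y \<ge> -1" "F = P \<inter> {y. u \<bullet> y = -1}"
    using facet_normal[OF poly int0 F(1)] by blast
  obtain u2 where u2: "\<forall>y\<in>P. u2 \<bullet> y \<ge> -1" "uminus ` F = P \<inter> {y. u2 \<bullet> y = -1}"
    using facet_normal[OF poly int0 F(2)] by blast
  have cardC: "card C = CARD('n)" using C(3) by simp
  obtain c where cb: "bij_betw c (UNIV::'n set) C"
    using finite_same_card_bij[of "UNIV::'n set" C] C(1) cardC by auto
  have rc: "range c = C" using cb by (simp add: bij_betw_def)
  have injc: "inj c" using cb by (simp add: bij_betw_def)
  have cF: "c j \<in> F" for j using rc C(4) hull_subset[of C convex] by auto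
  have cP: "c j \<in> P" for j using cF u(2) by auto
  have uc: "u \<bullet> c j = -1" for j using cF u(2) by auto
  define B :: "real^'n^'n" where "B = (\<chi> i j. c j $ i)"
  have colB: "column j B = c j" for j unfolding B_def column_def by (simp add: vec_eq_iff)
  have "\<exists>X::real^'n^'n. X ** B = mat 1"
    unfolding matrix_left_invertible_independent_columns
  proof (intro allI impI)
    fix x :: "'n \<Rightarrow> real" and i0 :: 'n assume h0: "(\<Sum>i\<in>UNIV. x i *s column i B) = 0"
    then have h: "(\<Sum>i\<in>UNIV. x i *\<^sub>R c i) = 0" by (simp add: colB scalar_mult_eq_scaleR)
    have "u \<bullet> (\<Sum>i\<in>UNIV. x i *\<^sub>R c i) = - (\<Sum>i\<in>UNIV. x i)"
      by (simp add: inner_sum_right uc sum_negf)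
    then have sx: "(\<Sum>i\<in>UNIV. x i) = 0" using h by simp
    show "x i0 = 0"
    proof (rule ccontr)
      assume xi: "x i0 \<noteq> 0"
      define U where "U v = x (inv c v)" for v
      have Uc: "U (c j) = x j" for j unfolding U_def using injc by simp
      have "affine_dependent C"
        unfolding affine_dependent_explicit
      proof (intro exI conjI)
        show "finite C" "C \<subseteq> C" by (auto simp: C(1))
        show "sum U C = 0" using sx unfolding rc[symmetric]
          by (simp add: sum.reindex[OF injc] Uc)
        show "\<exists>v\<in>C. U v \<noteq> 0" using xi Uc rc by auto
        show "(\<Sum>v\<in>C. U v *\<^sub>R v) = 0" using h unfolding rc[symmetric]
          by (simp add: sum.reindex[OF injc] Uc)
      qed
      then show False using C(2) by simp
    qed
  qed
  then obtain X :: "real^'n^'n" where XB: "X ** B = mat 1" by blast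
  then have BX: "B ** X = mat 1" using matrix_left_right_inverse by blast
  define f where "f i = X $ i" for i
  have cf: "\<forall>i j. f i \<bullet> c j = (if i = j then 1 else 0)"
  proof (intro allI)
    fix i j
    have "(X ** B) $ i $ j = f i \<bullet> c j"
      unfolding matrix_matrix_mult_def f_def B_def inner_vec_def by simp
    then show "f i \<bullet> c j = (if i = j then 1 else 0)" using XB by (simp add: mat_def)
  qed
  have H3: "\<forall>g. g = (\<Sum>k\<in>UNIV. (g \<bullet> c k) *\<^sub>R f k)"
  proof
    fix g :: "real^'n"
    show "g = (\<Sum>k\<in>UNIV. (g \<bullet> c k) *\<^sub>R f k)"
    proof (subst vec_eq_iff, intro allI)
      fix l
      have "(\<Sum>k\<in>UNIV. (g \<bullet> c k) *\<^sub>R f k) $ l = (\<Sum>k\<in>UNIV. (\<Sum>m\<in>UNIV. g $ m * B $ m $ k) * X $ k $ l)"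
        by (simp add: sum_component inner_vec_def f_def B_def)
      also have "\<dots> = (\<Sum>m\<in>UNIV. g $ m * (\<Sum>k\<in>UNIV. B $ m $ k * X $ k $ l))"
        by (simp add: sum_distrib_left sum_distrib_right mult.assoc) (rule sum.swap)
      also have "\<dots> = (\<Sum>m\<in>UNIV. g $ m * (mat 1 :: real^'n^'n) $ m $ l)"
        using BX unfolding matrix_matrix_mult_def by (simp add: vec_eq_iff)
      also have "\<dots> = g $ l" by (simp add: mat_def if_distrib cong: if_cong)
      finally show "g $ l = (\<Sum>k\<in>UNIV. (g \<bullet> c k) *\<^sub>R f k) $ l" by simp
    qed
  qed
  have span0: "g = 0" if "\<forall>j. g \<bullet> c j = 0" for g
    using H3 that by (metis (no_types, lifting) scale_zero_left sum.neutral)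
  have uQ: "u \<in> polar_dual P" using u(1) unfolding polar_dual_def by auto
  have uext: "u extreme_point_of polar_dual P"
    by (rule tight_extreme[OF uQ, where s = c]) (use cP uc span0 in auto)
  have ulat: "lattice_point u" using refl_lat_dual_ext[OF refl uext] .
  have "(u2 + u) \<bullet> c j = 0" for j
  proof -
    have "- c j \<in> uminus ` F" using cF by auto
    then have "u2 \<bullet> (- c j) = -1" using u2(2) by auto
    then show ?thesis using uc[of j] by (simp add: inner_add_left inner_minus_right)
  qed
  then have "u2 + u = 0" using span0 by blast
  then have u2u: "u2 = - u" by (simp add: add_eq_0_iff)
  have muQ: "- u \<in> polar_dual P" using u2(1) u2u unfolding polar_dual_def by auto
  have mF: "uminus ` F = P \<inter> {y. (- u) \<bullet> y = -1}" using u2(2) u2u by simp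
  define E where "E = {x. x extreme_point_of P}"
  have EV: "E \<subseteq> V0" unfolding E_def using V0(2) extreme_point_of_convex_hull by blast
  have fE: "finite E" using finite_subset[OF EV V0(1)] .
  have cpt: "compact P" using V0 by (simp add: compact_convex_hull finite_imp_compact)
  have PE: "P = convex hull E" unfolding E_def using Krein_Milman_Minkowski[OF cpt cvx] .
  have linm: "linear (uminus :: real^'n \<Rightarrow> real^'n)" by (simp add: linear_iff)
  have cext1: "c j extreme_point_of P" for j
  proof -
    have "c j extreme_point_of F"
      using extreme_point_of_convex_hull_affine_independent[OF C(2)] C(4) rc by auto
    then show ?thesis using extreme_point_of_face[OF Fface] by auto
  qed
  have cext2: "(- c j) extreme_point_of P" for j
  proof -
    have "c j extreme_point_of F"
      using extreme_point_of_convex_hull_affine_independent[OF C(2)] C(4) rc by auto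
    then have "{c j} face_of F" by (simp add: face_of_singleton)
    then have "uminus ` {c j} face_of uminus ` F" using face_of_linear_image[OF linm inj_uminus] by blast
    then have "{- c j} face_of P" using face_of_trans mFface by auto
    then show ?thesis by (simp add: face_of_singleton)
  qed
  have EP: "y \<in> P" if "y \<in> E" for y using that unfolding E_def extreme_point_of_def by auto
  have uF: "\<forall>y\<in>E. u \<bullet> y = -1 \<longrightarrow> y \<in> range c"
  proof (intro ballI impI)
    fix y assume y: "y \<in> E" "u \<bullet> y = -1"
    then have "y \<in> F" using EP u(2) by auto
    then have "y extreme_point_of F" using extreme_point_of_face[OF Fface] y unfolding E_def by auto
    then show "y \<in> range c" using C(4) rc extreme_point_of_convex_hull by blast
  qed
  have uF2: "\<forall>y\<in>E. (- u) \<bullet> y = -1 \<longrightarrow> y \<in> range (\<lambda>j. - c j)"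
  proof (intro ballI impI)
    fix y assume y: "y \<in> E" "(- u) \<bullet> y = -1"
    then have "y \<in> uminus ` F" using EP mF by auto
    then have "y extreme_point_of (uminus ` F)" using extreme_point_of_face[OF mFface] y unfolding E_def by auto
    moreover have "uminus ` F = convex hull (uminus ` C)" using C(4) convex_hull_linear_image[OF linm] by simp
    ultimately have "y \<in> uminus ` C" using extreme_point_of_convex_hull by metis
    then show "y \<in> range (\<lambda>j. - c j)" using rc by auto
  qed
  have core1: "\<exists>T. (T = 1 \<or> T = 2) \<and> lattice_point (T *\<^sub>R f i) \<and> u + T *\<^sub>R f i \<in> polar_dual P \<and>
     (T = 2 \<longrightarrow> (\<forall>q. q extreme_point_of P \<longrightarrow> q \<notin> range c \<longrightarrow> q \<notin> range (\<lambda>j. - c j)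
          \<longrightarrow> (u + T *\<^sub>R f i) \<bullet> q > -1))" for i
    by (rule core[OF refl simp E_def fE PE cf H3]) (use cext1 cext2 uQ ulat uc uF in auto)
  then have "\<exists>T. \<forall>i. (T i = 1 \<or> T i = 2) \<and> lattice_point (T i *\<^sub>R f i) \<and> u + T i *\<^sub>R f i \<in> polar_dual P \<and>
     (T i = 2 \<longrightarrow> (\<forall>q. q extreme_point_of P \<longrightarrow> q \<notin> range c \<longrightarrow> q \<notin> range (\<lambda>j. - c j)
          \<longrightarrow> (u + T i *\<^sub>R f i) \<bullet> q > -1))" by (intro choice allI)
  then obtain T where T: "\<forall>i. (T i = 1 \<or> T i = 2) \<and> lattice_point (T i *\<^sub>R f i) \<and> u + T i *\<^sub>R f i \<in> polar_dual P \<and>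
     (T i = 2 \<longrightarrow> (\<forall>q. q extreme_point_of P \<longrightarrow> q \<notin> range c \<longrightarrow> q \<notin> range (\<lambda>j. - c j)
          \<longrightarrow> (u + T i *\<^sub>R f i) \<bullet> q > -1))" by blast
  have cf': "\<forall>i j. (- f i) \<bullet> (- c j) = (if i = j then 1 else 0)" using cf by simp
  have H3': "\<forall>g. g = (\<Sum>k\<in>UNIV. (g \<bullet> (- c k)) *\<^sub>R (- f k))" using H3 by simp
  have core2: "\<exists>T. (T = 1 \<or> T = 2) \<and> lattice_point (T *\<^sub>R (- f i)) \<and> - u + T *\<^sub>R (- f i) \<in> polar_dual P \<and>
     (T = 2 \<longrightarrow> (\<forall>q. q extreme_point_of P \<longrightarrow> q \<notin> range (\<lambda>j. - c j) \<longrightarrow> q \<notin> range (\<lambda>j. - (- c j))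
          \<longrightarrow> (- u + T *\<^sub>R (- f i)) \<bullet> q > -1))" for i
    by (rule core[OF refl simp E_def fE PE cf' H3']) (use cext1 cext2 muQ lat_minus[OF ulat] uc uF2 in auto)
  then have "\<exists>M. \<forall>i. (M i = 1 \<or> M i = 2) \<and> lattice_point (M i *\<^sub>R (- f i)) \<and> - u + M i *\<^sub>R (- f i) \<in> polar_dual P \<and>
     (M i = 2 \<longrightarrow> (\<forall>q. q extreme_point_of P \<longrightarrow> q \<notin> range (\<lambda>j. - c j) \<longrightarrow> q \<notin> range (\<lambda>j. - (- c j))
          \<longrightarrow> (- u + M i *\<^sub>R (- f i)) \<bullet> q > -1))" by (intro choice allI)
  then obtain M where M: "\<forall>i. (M i = 1 \<or> M i = 2) \<and> lattice_point (M i *\<^sub>R (- f i)) \<and> - u + M i *\<^sub>R (- f i) \<in> polar_dual P \<and>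
     (M i = 2 \<longrightarrow> (\<forall>q. q extreme_point_of P \<longrightarrow> q \<notin> range (\<lambda>j. - c j) \<longrightarrow> q \<notin> range (\<lambda>j. - (- c j))
          \<longrightarrow> (- u + M i *\<^sub>R (- f i)) \<bullet> q > -1))" by blast
  define Bad where "Bad = {k. \<not> lattice_point (f k)}"
  have Tk: "T k = 1 \<or> T k = 2" "lattice_point (T k *\<^sub>R f k)" "u + T k *\<^sub>R f k \<in> polar_dual P"
    "T k = 2 \<Longrightarrow> q extreme_point_of P \<Longrightarrow> q \<notin> range c \<Longrightarrow> q \<notin> range (\<lambda>j. - c j) \<Longrightarrow> (u + T k *\<^sub>R f k) \<bullet> q > -1"
    for k q using T by blast+
  have Mk: "M k = 1 \<or> M k = 2" "lattice_point (M k *\<^sub>R (- f k))" "- u + M k *\<^sub>R (- f k) \<in> polar_dual P"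
    "M k = 2 \<Longrightarrow> q extreme_point_of P \<Longrightarrow> q \<notin> range (\<lambda>j. - c j) \<Longrightarrow> q \<notin> range c \<Longrightarrow> (- u + M k *\<^sub>R (- f k)) \<bullet> q > -1"
    for k q using M by auto
  have bad2: "T k = 2 \<and> M k = 2 \<and> lattice_point (2 *\<^sub>R f k)" if "k \<in> Bad" for k
  proof -
    have "T k \<noteq> 1" using Tk(2)[of k] that unfolding Bad_def by auto
    moreover have "M k \<noteq> 1" using lat_minus[OF Mk(2)[of k]] that unfolding Bad_def by auto
    ultimately show ?thesis using Tk(1,2)[of k] Mk(1)[of k] by auto
  qed
  have coordq: "f k \<bullet> q \<in> {-1,0,1} \<and> (k \<in> Bad \<longrightarrow> f k \<bullet> q = 0)"
    if q: "q extreme_point_of P" "q \<notin> range c" "q \<notin> range (\<lambda>j. - c j)" for k q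
  proof -
    have qE: "q \<in> E" using q unfolding E_def by auto
    have qP: "q \<in> P" using EP qE by auto
    have ql: "lattice_point q" using refl_lat_ext[OF refl q(1)] .
    have "u \<bullet> q \<in> \<int>" using lat_dot[OF ulat ql] .
    then obtain m where m: "u \<bullet> q = of_int m" by (auto elim: Ints_cases)
    have "u \<bullet> q \<ge> -1" using u(1) qP by auto
    moreover have "(- u) \<bullet> q \<ge> -1" using muQ qP unfolding polar_dual_def by auto
    moreover have "u \<bullet> q \<noteq> -1" using uF qE q by auto
    moreover have "(- u) \<bullet> q \<noteq> -1" using uF2 qE q by auto
    ultimately have "m = 0" using m by auto
    then have uq: "u \<bullet> q = 0" using m by simp
    have A: "T k * (f k \<bullet> q) \<ge> -1"
      using Tk(3)[of k] qP uq unfolding polar_dual_def by (auto simp: inner_add_left)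
    have B: "- (M k * (f k \<bullet> q)) \<ge> -1"
    proof -
      have "(- u + M k *\<^sub>R (- f k)) \<bullet> q \<ge> -1" using Mk(3)[of k] qP unfolding polar_dual_def by blast
      then show ?thesis using uq by (simp add: inner_add_left inner_diff_left)
    qed
    show ?thesis
    proof (cases "k \<in> Bad")
      case True
      then have T2: "T k = 2" "M k = 2" and l2: "lattice_point (2 *\<^sub>R f k)" using bad2 by auto
      have "(u + T k *\<^sub>R f k) \<bullet> q > -1" using Tk(4)[OF T2(1) q] .
      then have s1: "2 * (f k \<bullet> q) > -1" using uq T2 by (simp add: inner_add_left)
      have "(- u + M k *\<^sub>R (- f k)) \<bullet> q > -1" using Mk(4)[OF T2(2) q(1) q(3) q(2)] .
      then have s2: "2 * (f k \<bullet> q) < 1" using uq T2 by (simp add: inner_add_left inner_diff_left)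
      have "(2 *\<^sub>R f k) \<bullet> q \<in> \<int>" using lat_dot[OF l2 ql] .
      then obtain n where n: "2 * (f k \<bullet> q) = of_int n" by (auto elim: Ints_cases)
      then have "n = 0" using s1 s2 by auto
      then show ?thesis using n by simp
    next
      case False
      then have "f k \<bullet> q \<in> \<int>" using lat_dot[OF _ ql, of "f k"] unfolding Bad_def by auto
      then obtain n where n: "f k \<bullet> q = of_int n" by (auto elim: Ints_cases)
      have "n \<ge> -1"
      proof (rule ccontr)
        assume "\<not> n \<ge> -1"
        then have "f k \<bullet> q \<le> -2" using n by simp
        then have "T k * (f k \<bullet> q) \<le> 1 * (-2)" using Tk(1)[of k] by auto
        then show False using A by simp
      qed
      moreover have "n \<le> 1"
      proof (rule ccontr)
        assume "\<not> n \<le> 1"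
        then have "f k \<bullet> q \<ge> 2" using n by simp
        then have "M k * (f k \<bullet> q) \<ge> 1 * 2" using Mk(1)[of k] by auto
        then show False using B by simp
      qed
      ultimately have "n \<in> {-1,0,1}" by auto
      then show ?thesis using n False by auto
    qed
  qed
  define Gm where "Gm = {h :: 'n \<Rightarrow> int. (\<forall>j. j \<notin> Bad \<longrightarrow> h j = 0) \<and> lattice_point (\<Sum>b\<in>Bad. of_int (h b) *\<^sub>R f b)}"
  have finB: "finite Bad" by simp
  have lat0: "lattice_point (0::real^'n)" unfolding lattice_point_def by simp
  have g1: "\<forall>g\<in>Gm. \<forall>j. j \<notin> Bad \<longrightarrow> g j = 0" unfolding Gm_def by auto
  have g2: "(\<lambda>j. 0) \<in> Gm" unfolding Gm_def using lat0 by simp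
  have g3: "\<forall>a\<in>Gm. \<forall>b\<in>Gm. (\<lambda>j. a j + b j) \<in> Gm"
    unfolding Gm_def by (auto simp: scaleR_add_left sum.distrib intro!: lat_add)
  have g4: "\<forall>a\<in>Gm. \<forall>m::int. (\<lambda>j. m * a j) \<in> Gm"
  proof (intro ballI allI)
    fix a and m :: int assume a: "a \<in> Gm"
    have "(\<Sum>b\<in>Bad. of_int (m * a b) *\<^sub>R f b) = of_int m *\<^sub>R (\<Sum>b\<in>Bad. of_int (a b) *\<^sub>R f b)"
      by (simp add: scaleR_sum_right)
    then show "(\<lambda>j. m * a j) \<in> Gm" using a lat_scale unfolding Gm_def by auto
  qed
  have g5: "\<forall>k\<in>Bad. e2 k \<in> Gm"
  proof
    fix k assume k: "k \<in> Bad"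
    have "(\<Sum>b\<in>Bad. of_int (e2 k b) *\<^sub>R f b) = 2 *\<^sub>R f k"
    proof -
      have "(\<Sum>b\<in>Bad. of_int (e2 k b) *\<^sub>R f b) = (\<Sum>b\<in>Bad. if b = k then 2 *\<^sub>R f b else 0)"
        unfolding e2_def by (rule sum.cong) auto
      also have "\<dots> = 2 *\<^sub>R f k" using k by (simp add: sum.delta)
      finally show ?thesis .
    qed
    then show "e2 k \<in> Gm" using bad2[OF k] k unfolding Gm_def e2_def by auto
  qed
  obtain r where r1: "\<forall>k\<in>Bad. r k \<in> Gm \<and> ((\<forall>j. r k j \<in> {-1,0,1}) \<or> (r k = e2 k \<and> (\<forall>g\<in>Gm. even (g k))))"
    and r2: "\<forall>h\<in>Gm. \<exists>\<beta>. h = (\<lambda>j. \<Sum>k\<in>Bad. \<beta> k * r k j)"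
    using code_basis[OF finB g1 g2 g3 g4 g5] by blast
  have sumf: "(\<Sum>k\<in>UNIV. f k) = - u"
  proof -
    have "u = (\<Sum>k\<in>UNIV. (u \<bullet> c k) *\<^sub>R f k)" using H3 by blast
    then show ?thesis by (simp add: uc sum_negf)
  qed
  have one: "(\<lambda>j. if j \<in> Bad then 1 else 0) \<in> Gm"
  proof -
    have "(\<Sum>k\<in>UNIV. f k) = (\<Sum>k\<in>UNIV - Bad. f k) + (\<Sum>k\<in>Bad. f k)"
      by (rule sum.subset_diff) auto
    then have "(\<Sum>k\<in>Bad. f k) = - u - (\<Sum>k\<in>UNIV - Bad. f k)" using sumf by (simp add: algebra_simps)
    moreover have "lattice_point (\<Sum>k\<in>UNIV - Bad. f k)" by (rule lat_sum) (auto simp: Bad_def)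
    ultimately have "lattice_point (\<Sum>k\<in>Bad. f k)" using lat_diff[OF lat_minus[OF ulat]] by simp
    moreover have "(\<Sum>b\<in>Bad. of_int (if b \<in> Bad then 1 else 0) *\<^sub>R f b) = (\<Sum>k\<in>Bad. f k)"
      by (rule sum.cong) auto
    ultimately show ?thesis unfolding Gm_def by auto
  qed
  have rB: "r k \<in> Gm" "\<forall>j. r k j \<in> {-1,0,1}" if "k \<in> Bad" for k
  proof -
    show "r k \<in> Gm" using r1 that by auto
    have "\<not> (\<forall>g\<in>Gm. even (g k))"
    proof
      assume "\<forall>g\<in>Gm. even (g k)"
      from bspec[OF this one] show False using that by simp
    qed
    then show "\<forall>j. r k j \<in> {-1,0,1}" using r1 that by blast
  qed
  define U :: "real^'n^'n" where "U = (\<chi> k. if k \<in> Bad then (\<Sum>b\<in>Bad. of_int (r k b) *\<^sub>R f b) else f k)"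
  have rowU: "U $ k = (if k \<in> Bad then (\<Sum>b\<in>Bad. of_int (r k b) *\<^sub>R f b) else f k)" for k
    unfolding U_def by simp
  have Ulat: "lattice_point (U $ k)" for k
    using rB(1)[of k] unfolding rowU Gm_def Bad_def by auto
  have Uq: "(U *v q) $ k = (if k \<in> Bad then (\<Sum>b\<in>Bad. of_int (r k b) * (f b \<bullet> q)) else f k \<bullet> q)" for q k
    unfolding mv_row rowU by (simp add: inner_sum_left)
  have vert: "\<forall>v. v extreme_point_of P \<longrightarrow> (\<forall>i. (U *v v) $ i \<in> {-1, 0, 1})"
  proof (intro allI impI)
    fix v i assume v: "v extreme_point_of P"
    have rv: "r i b \<in> {-1,0,1}" if "i \<in> Bad" for b using rB(2)[OF that] by blast
    have rz: "r i b = 0" if "i \<in> Bad" "b \<notin> Bad" for b using rB(1)[OF that(1)] that(2) unfolding Gm_def by auto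
    show "(U *v v) $ i \<in> {-1, 0, 1}"
    proof (cases "v \<in> range c")
      case True
      then obtain j where j: "v = c j" by auto
      have "(\<Sum>b\<in>Bad. of_int (r i b) * (f b \<bullet> c j)) = (\<Sum>b\<in>Bad. if b = j then of_int (r i b) else 0)"
        using cf by (intro sum.cong) auto
      also have "\<dots> = (if j \<in> Bad then of_int (r i j) else 0)" by (simp add: sum.delta')
      finally have "i \<in> Bad \<Longrightarrow> (\<Sum>b\<in>Bad. of_int (r i b) * (f b \<bullet> c j)) \<in> {-1,0,1::real}"
        using rv[of j] by auto
      then show ?thesis unfolding Uq j using cf by auto
    next
      case False
      show ?thesis
      proof (cases "v \<in> range (\<lambda>j. - c j)")
        case True
        then obtain j where j: "v = - c j" by auto
        have "(\<Sum>b\<in>Bad. of_int (r i b) * (f b \<bullet> - c j)) = (\<Sum>b\<in>Bad. if b = j then - of_int (r i b) else 0)"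
          using cf by (intro sum.cong) (auto simp: inner_minus_right)
        also have "\<dots> = (if j \<in> Bad then - of_int (r i j) else 0)" by (simp add: sum.delta')
        finally have "i \<in> Bad \<Longrightarrow> (\<Sum>b\<in>Bad. of_int (r i b) * (f b \<bullet> - c j)) \<in> {-1,0,1::real}"
          using rv[of j] by auto
        then show ?thesis unfolding Uq j using cf by (auto simp: inner_minus_right)
      next
        case nm: False
        have cq: "f k \<bullet> v \<in> {-1,0,1} \<and> (k \<in> Bad \<longrightarrow> f k \<bullet> v = 0)" for k
          using coordq[OF v False nm] .
        have "(\<Sum>b\<in>Bad. of_int (r i b) * (f b \<bullet> v)) = 0"
          using cq by (intro sum.neutral) auto
        then show ?thesis unfolding Uq using cq[of i] by auto
      qed
    qed
  qed
  have gen: "\<exists>\<gamma>. z = (\<Sum>k\<in>UNIV. of_int (\<gamma> k) *\<^sub>R U $ k)" if zl: "lattice_point z" for z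
  proof -
    define \<alpha> where "\<alpha> k = z \<bullet> c k" for k
    define ai where "ai k = \<lfloor>\<alpha> k\<rfloor>" for k
    have cl: "lattice_point (c k)" for k using refl_lat_ext[OF refl cext1] .
    have ai: "of_int (ai k) = \<alpha> k" for k unfolding ai_def \<alpha>_def using lat_dot[OF zl cl] by simp
    have zs: "z = (\<Sum>k\<in>UNIV. \<alpha> k *\<^sub>R f k)" unfolding \<alpha>_def using H3 by blast
    have split: "(\<Sum>k\<in>UNIV. g k) = (\<Sum>k\<in>UNIV - Bad. g k) + (\<Sum>k\<in>Bad. g k)" for g :: "'n \<Rightarrow> real^'n"
      by (rule sum.subset_diff) auto
    define h where "h b = (if b \<in> Bad then ai b else 0)" for b
    have hsum: "(\<Sum>b\<in>Bad. of_int (h b) *\<^sub>R f b) = (\<Sum>b\<in>Bad. \<alpha> b *\<^sub>R f b)"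
      unfolding h_def using ai by (intro sum.cong) auto
    have "(\<Sum>b\<in>Bad. \<alpha> b *\<^sub>R f b) = z - (\<Sum>k\<in>UNIV - Bad. \<alpha> k *\<^sub>R f k)"
      using zs split[of "\<lambda>k. \<alpha> k *\<^sub>R f k"] by (simp add: algebra_simps)
    moreover have "lattice_point (\<Sum>k\<in>UNIV - Bad. \<alpha> k *\<^sub>R f k)"
    proof (rule lat_sum)
      fix k assume "k \<in> UNIV - Bad"
      then have "lattice_point (f k)" unfolding Bad_def by auto
      then show "lattice_point (\<alpha> k *\<^sub>R f k)" using lat_scale[of "f k" "ai k"] ai by simp
    qed
    ultimately have "lattice_point (\<Sum>b\<in>Bad. of_int (h b) *\<^sub>R f b)" using hsum lat_diff[OF zl] by simp
    then have "h \<in> Gm" unfolding Gm_def h_def by auto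
    then obtain \<beta> where \<beta>: "h = (\<lambda>j. \<Sum>k\<in>Bad. \<beta> k * r k j)" using r2 by blast
    have "(\<Sum>k\<in>Bad. of_int (\<beta> k) *\<^sub>R U $ k) = (\<Sum>k\<in>Bad. \<Sum>b\<in>Bad. of_int (\<beta> k * r k b) *\<^sub>R f b)"
      unfolding rowU by (intro sum.cong) (auto simp: scaleR_sum_right)
    also have "\<dots> = (\<Sum>b\<in>Bad. \<Sum>k\<in>Bad. of_int (\<beta> k * r k b) *\<^sub>R f b)" by (rule sum.swap)
    also have "\<dots> = (\<Sum>b\<in>Bad. of_int (h b) *\<^sub>R f b)"
      unfolding \<beta> by (intro sum.cong) (auto simp: scaleR_sum_left)
    finally have bsum: "(\<Sum>k\<in>Bad. of_int (\<beta> k) *\<^sub>R U $ k) = (\<Sum>b\<in>Bad. \<alpha> b *\<^sub>R f b)" using hsum by simp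
    define \<gamma> where "\<gamma> k = (if k \<in> Bad then \<beta> k else ai k)" for k
    have "(\<Sum>k\<in>UNIV. of_int (\<gamma> k) *\<^sub>R U $ k) = (\<Sum>k\<in>UNIV - Bad. of_int (\<gamma> k) *\<^sub>R U $ k) + (\<Sum>k\<in>Bad. of_int (\<gamma> k) *\<^sub>R U $ k)"
      by (rule split)
    also have "(\<Sum>k\<in>Bad. of_int (\<gamma> k) *\<^sub>R U $ k) = (\<Sum>b\<in>Bad. \<alpha> b *\<^sub>R f b)"
      using bsum unfolding \<gamma>_def by simp
    also have "(\<Sum>k\<in>UNIV - Bad. of_int (\<gamma> k) *\<^sub>R U $ k) = (\<Sum>k\<in>UNIV - Bad. \<alpha> k *\<^sub>R f k)"
      unfolding \<gamma>_def rowU using ai by (intro sum.cong) auto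
    also have "(\<Sum>k\<in>UNIV - Bad. \<alpha> k *\<^sub>R f k) + (\<Sum>b\<in>Bad. \<alpha> b *\<^sub>R f b) = z"
      using zs split[of "\<lambda>k. \<alpha> k *\<^sub>R f k"] by simp
    finally show ?thesis by metis
  qed
  have "\<forall>j. \<exists>\<gamma>. (\<chi> l. if l = j then 1 else 0) = (\<Sum>k\<in>UNIV. of_int (\<gamma> k) *\<^sub>R U $ k)"
  proof
    fix j
    have "lattice_point ((\<chi> l. if l = j then 1 else 0) :: real^'n)" unfolding lattice_point_def by simp
    then show "\<exists>\<gamma>. (\<chi> l. if l = j then 1 else 0) = (\<Sum>k\<in>UNIV. of_int (\<gamma> k) *\<^sub>R U $ k)" by (rule gen)
  qed
  then obtain \<Gamma> where \<Gamma>: "\<forall>j. (\<chi> l. if l = j then 1 else 0) = (\<Sum>k\<in>UNIV. of_int (\<Gamma> j k) *\<^sub>R U $ k)"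
    by metis
  define GM :: "real^'n^'n" where "GM = (\<chi> j k. of_int (\<Gamma> j k))"
  have "GM ** U = mat 1"
  proof (subst vec_eq_iff, intro allI, subst vec_eq_iff, intro allI)
    fix j l
    have "(GM ** U) $ j $ l = (\<Sum>k\<in>UNIV. of_int (\<Gamma> j k) *\<^sub>R U $ k) $ l"
      unfolding GM_def matrix_matrix_mult_def by (simp add: sum_component)
    also have "\<dots> = ((\<chi> l. if l = j then 1 else 0) :: real^'n) $ l" using \<Gamma> by metis
    finally show "(GM ** U) $ j $ l = mat 1 $ j $ l" by (simp add: mat_def)
  qed
  then have dd: "det GM * det U = 1" by (metis det_I det_mul)
  have Uint: "\<forall>i j. U $ i $ j \<in> \<int>" using Ulat unfolding lattice_point_def by auto
  have "det GM \<in> \<int>" unfolding GM_def by (rule det_Ints) simp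
  then obtain a where a: "det GM = of_int a" by (auto elim: Ints_cases)
  obtain b where b: "det U = of_int b" using det_Ints[OF Uint] by (auto elim: Ints_cases)
  have "a * b = 1" using dd a b by (metis of_int_eq_1_iff of_int_mult)
  then have "\<bar>b\<bar> = 1" using abs_zmult_eq_1[of b a] by (simp add: mult.commute)
  then have "\<bar>det U\<bar> = 1" using b by simp
  then have "unimodular U" unfolding unimodular_def using Uint by auto
  then show ?thesis using vert by blast
qed

end
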